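(* Let $\mu$ be a joint distribution of a triple $(X,A,Y)$ with $X\in\mathcal{X}\subseteq\mathbb{R}^d$, $A\in\{0,1\}$ with $\Pr(A=0),\Pr(A=1)>0$, and $Y\in[-1,1]$. Let $\rho\ge0$ and let $h:\mathcal{X}\to\mathbb{R}$ satisfy $|h(x)-h(x')|\le\rho\|x-x'\|$ for all $x,x'\in\mathcal{X}$ ($\rho$-individual fairness), and let $\widehat{Y}=h(X)$. Then $$|\varepsilon_{1,\mu_0}(\widehat{Y})-\varepsilon_{1,\mu_1}(\widehat{Y})|\le\sqrt{\rho^2+1}\cdot W_1(\mu_0,\mu_1).$$
   Context: $\|\cdot\|$ is the Euclidean norm. For $a\in\{0,1\}$, $\mu_a$ is the conditional distribution of $(X,Y)$ given $A=a$, viewed as a distribution on $\mathbb{R}^{d+1}$. $\varepsilon_{1,\nu}(\widehat{Y}):=\mathbb{E}_\nu[|\widehat{Y}-Y|]$. $W_1(\mu_0,\mu_1)=\inf_\gamma\int\|(x,y)-(x',y')\|\,d\gamma$ over couplings $\gamma$ of $\mu_0,\mu_1$, with Euclidean norm on $\mathbb{R}^{d+1}$. *)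

theory Defs
  imports "HOL-Probability.Probability"
begin

text \<open>Conditional law of (X,Y) given A = a, on R^d x R (product norm is Euclidean).\<close>
definition cond_law ::
  "'w measure \<Rightarrow> ('w \<Rightarrow> 'a::euclidean_space) \<Rightarrow> ('w \<Rightarrow> nat) \<Rightarrow> ('w \<Rightarrow> real) \<Rightarrow> nat \<Rightarrow> ('a \<times> real) measure"
  where "cond_law M X A Y a =
    distr (uniform_measure M {\<omega> \<in> space M. A \<omega> = a}) borel (\<lambda>\<omega>. (X \<omega>, Y \<omega>))"

definition couplings :: "'b measure \<Rightarrow> 'b measure \<Rightarrow> ('b \<times> 'b) measure set"
  where "couplings P Q = {\<gamma>. sets \<gamma> = sets (P \<Otimes>\<^sub>M Q) \<and>
      distr \<gamma> P fst = P \<and> distr \<gamma> Q snd = Q}"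

definition W1 :: "('b::metric_space) measure \<Rightarrow> 'b measure \<Rightarrow> ennreal"
  where "W1 P Q = (INF \<gamma> \<in> couplings P Q. \<integral>\<^sup>+ z. ennreal (dist (fst z) (snd z)) \<partial>\<gamma>)"

definition eps1 :: "('a \<times> real) measure \<Rightarrow> ('a \<Rightarrow> real) \<Rightarrow> real"
  where "eps1 \<nu> h = (\<integral>z. \<bar>h (fst z) - snd z\<bar> \<partial>\<nu>)"

end

theory Submission
  imports Defs
begin


lemma pt_bound:
  fixes H :: "'a::euclidean_space \<Rightarrow> real"
  assumes L: "\<And>x y. \<bar>H x - H y\<bar> \<le> \<rho> * norm (x - y)" and r: "\<rho> \<ge> 0"
  shows "\<bar>\<bar>H (fst z) - snd z\<bar> - \<bar>H (fst z') - snd z'\<bar>\<bar> \<le> sqrt (\<rho>\<^sup>2 + 1) * dist z z'"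
proof -
  obtain x y x' y' where z: "z = (x, y)" "z' = (x', y')" by (cases z, cases z') auto
  define a where "a = dist x x'"
  define b where "b = dist y y'"
  have a0: "a \<ge> 0" "b \<ge> 0" by (auto simp: a_def b_def)
  have "\<bar>\<bar>H x - y\<bar> - \<bar>H x' - y'\<bar>\<bar> \<le> \<bar>H x - H x'\<bar> + \<bar>y - y'\<bar>" by linarith
  also have "\<dots> \<le> \<rho> * a + b" using L[of x x'] by (simp add: a_def b_def dist_norm dist_real_def)
  also have "\<dots> \<le> sqrt ((\<rho>\<^sup>2 + 1) * (a\<^sup>2 + b\<^sup>2))"
  proof (rule real_le_rsqrt)
    have "0 \<le> (\<rho> * b - a)\<^sup>2" by simp
    then show "(\<rho> * a + b)\<^sup>2 \<le> (\<rho>\<^sup>2 + 1) * (a\<^sup>2 + b\<^sup>2)" by (simp add: power2_eq_square algebra_simps)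
  qed
  also have "\<dots> = sqrt (\<rho>\<^sup>2 + 1) * dist z z'"
    by (simp add: z dist_Pair_Pair a_def b_def real_sqrt_mult)
  finally show ?thesis by (simp add: z)
qed

lemma key:
  fixes P Q :: "('a::euclidean_space \<times> real) measure" and H :: "'a \<Rightarrow> real"
  assumes sP: "sets P = sets borel" and sQ: "sets Q = sets borel"
    and Hm: "H \<in> borel_measurable borel"
    and L: "\<And>x y. \<bar>H x - H y\<bar> \<le> \<rho> * norm (x - y)" and r: "\<rho> \<ge> 0"
    and iP: "integrable P (\<lambda>z. \<bar>H (fst z) - snd z\<bar>)"
    and iQ: "integrable Q (\<lambda>z. \<bar>H (fst z) - snd z\<bar>)"
  shows "ennreal \<bar>(\<integral>z. \<bar>H (fst z) - snd z\<bar> \<partial>P) - (\<integral>z. \<bar>H (fst z) - snd z\<bar> \<partial>Q)\<bar>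
      \<le> ennreal (sqrt (\<rho>\<^sup>2 + 1)) * W1 P Q"
proof -
  define F where "F = (\<lambda>z::'a \<times> real. \<bar>H (fst z) - snd z\<bar>)"
  define c where "c = sqrt (\<rho>\<^sup>2 + 1)"
  define l where "l = \<bar>(\<integral>z. F z \<partial>P) - (\<integral>z. F z \<partial>Q)\<bar>"
  have c1: "c \<ge> 1" unfolding c_def by simp
  have "F \<in> borel_measurable (borel \<Otimes>\<^sub>M borel)" unfolding F_def using Hm by measurable
  then have Fm: "F \<in> borel_measurable borel" by (metis borel_prod)
  have bound: "ennreal l \<le> ennreal c * (\<integral>\<^sup>+ z. ennreal (dist (fst z) (snd z)) \<partial>\<gamma>)"
    if g: "\<gamma> \<in> couplings P Q" for \<gamma>
  proof -
    from g have sg: "sets \<gamma> = sets (P \<Otimes>\<^sub>M Q)" and dP: "distr \<gamma> P fst = P" and dQ: "distr \<gamma> Q snd = Q"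
      by (auto simp: couplings_def)
    have mf: "fst \<in> measurable \<gamma> P" using measurable_cong_sets[OF sg refl] measurable_fst by blast
    have ms: "snd \<in> measurable \<gamma> Q" using measurable_cong_sets[OF sg refl] measurable_snd by blast
    have FP: "F \<in> borel_measurable P" using Fm measurable_cong_sets[OF sP refl] by blast
    have FQ: "F \<in> borel_measurable Q" using Fm measurable_cong_sets[OF sQ refl] by blast
    have e1: "(\<integral>z. F z \<partial>P) = (\<integral>w. F (fst w) \<partial>\<gamma>)"
      using integral_distr[OF mf FP] dP by simp
    have e2: "(\<integral>z. F z \<partial>Q) = (\<integral>w. F (snd w) \<partial>\<gamma>)"
      using integral_distr[OF ms FQ] dQ by simp
    have i1: "integrable \<gamma> (\<lambda>w. F (fst w))"
      using integrable_distr_eq[OF mf FP] dP iP by (simp add: F_def)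
    have i2: "integrable \<gamma> (\<lambda>w. F (snd w))"
      using integrable_distr_eq[OF ms FQ] dQ iQ by (simp add: F_def)
    have "l = \<bar>\<integral>w. F (fst w) - F (snd w) \<partial>\<gamma>\<bar>"
      unfolding l_def e1 e2 using i1 i2 by simp
    also have "\<dots> \<le> (\<integral>w. \<bar>F (fst w) - F (snd w)\<bar> \<partial>\<gamma>)"
      by (rule integral_abs_bound)
    finally have "ennreal l \<le> ennreal (\<integral>w. \<bar>F (fst w) - F (snd w)\<bar> \<partial>\<gamma>)" by simp
    also have "\<dots> = (\<integral>\<^sup>+w. ennreal \<bar>F (fst w) - F (snd w)\<bar> \<partial>\<gamma>)"
      by (rule nn_integral_eq_integral[symmetric]) (use i1 i2 in auto)
    also have "\<dots> \<le> (\<integral>\<^sup>+w. ennreal c * ennreal (dist (fst w) (snd w)) \<partial>\<gamma>)"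
    proof (rule nn_integral_mono)
      fix w :: "('a \<times> real) \<times> ('a \<times> real)"
      have "\<bar>F (fst w) - F (snd w)\<bar> \<le> c * dist (fst w) (snd w)"
        unfolding F_def c_def by (rule pt_bound[OF L r])
      then show "ennreal \<bar>F (fst w) - F (snd w)\<bar> \<le> ennreal c * ennreal (dist (fst w) (snd w))"
        using c1 by (simp add: ennreal_mult[symmetric])
    qed
    also have "\<dots> = ennreal c * (\<integral>\<^sup>+ z. ennreal (dist (fst z) (snd z)) \<partial>\<gamma>)"
    proof (rule nn_integral_cmult)
      have "(\<lambda>z::('a \<times> real) \<times> ('a \<times> real). dist (fst z) (snd z)) \<in> borel_measurable borel"
        by (intro borel_measurable_continuous_onI continuous_intros)
      then have "(\<lambda>z::('a \<times> real) \<times> ('a \<times> real). dist (fst z) (snd z)) \<in> borel_measurable (borel \<Otimes>\<^sub>M borel)"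
        by (metis borel_prod)
      then have "(\<lambda>z::('a \<times> real) \<times> ('a \<times> real). ennreal (dist (fst z) (snd z))) \<in> borel_measurable (borel \<Otimes>\<^sub>M borel)"
        using measurable_compose[OF _ measurable_ennreal] by blast
      moreover have "sets (borel \<Otimes>\<^sub>M borel) = sets \<gamma>"
        using sg sets_pair_measure_cong[OF sP sQ] by simp
      ultimately show "(\<lambda>z. ennreal (dist (fst z) (snd z))) \<in> borel_measurable \<gamma>"
        using measurable_cong_sets by blast
    qed
    finally show ?thesis .
  qed
  have l0: "l \<ge> 0" by (simp add: l_def)
  have "ennreal (l / c) \<le> W1 P Q" unfolding W1_def
  proof (rule INF_greatest)
    fix \<gamma> assume g: "\<gamma> \<in> couplings P Q"
    have "ennreal (l / c) = ennreal (1 / c) * ennreal l"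
      using c1 l0 by (simp add: ennreal_mult[symmetric])
    also have "\<dots> \<le> ennreal (1 / c) * (ennreal c * (\<integral>\<^sup>+ z. ennreal (dist (fst z) (snd z)) \<partial>\<gamma>))"
      by (rule mult_left_mono[OF bound[OF g]]) simp
    also have "\<dots> = (\<integral>\<^sup>+ z. ennreal (dist (fst z) (snd z)) \<partial>\<gamma>)"
      using c1 by (simp add: mult.assoc[symmetric] ennreal_mult[symmetric])
    finally show "ennreal (l / c) \<le> (\<integral>\<^sup>+ z. ennreal (dist (fst z) (snd z)) \<partial>\<gamma>)" .
  qed
  then have "ennreal c * ennreal (l / c) \<le> ennreal c * W1 P Q"
    by (rule mult_left_mono) simp
  moreover have "ennreal c * ennreal (l / c) = ennreal l"
    using c1 l0 by (simp add: ennreal_mult[symmetric])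
  ultimately show ?thesis by (simp add: l_def F_def c_def)
qed

lemma mcshane:
  fixes h :: "'a::real_normed_vector \<Rightarrow> real"
  assumes ne: "S \<noteq> {}" and r: "\<rho> \<ge> 0"
    and L: "\<forall>x\<in>S. \<forall>x'\<in>S. \<bar>h x - h x'\<bar> \<le> \<rho> * norm (x - x')"
  obtains H where "\<And>x. x \<in> S \<Longrightarrow> H x = h x" "\<And>x y. \<bar>H x - H y\<bar> \<le> \<rho> * norm (x - y)"
proof -
  obtain x0 where x0: "x0 \<in> S" using ne by blast
  define H where "H = (\<lambda>x. INF x'\<in>S. h x' + \<rho> * norm (x - x'))"
  have bdd: "bdd_below ((\<lambda>x'. h x' + \<rho> * norm (x - x')) ` S)" for x
  proof (rule bdd_belowI2)
    fix x' assume "x' \<in> S"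
    then have "h x0 - h x' \<le> \<rho> * norm (x0 - x')" using L x0 by fastforce
    moreover have "norm (x0 - x') \<le> norm (x0 - x) + norm (x - x')" using norm_triangle_ineq[of "x0 - x" "x - x'"] by simp
    ultimately have "h x0 - \<rho> * norm (x0 - x) \<le> h x' + \<rho> * norm (x - x')"
      using r by (smt (verit, best) mult_left_mono distrib_left)
    then show "h x0 - \<rho> * norm (x0 - x) \<le> h x' + \<rho> * norm (x - x')" .
  qed
  have eq: "H x = h x" if x: "x \<in> S" for x
  proof (rule antisym)
    show "H x \<le> h x" unfolding H_def
      using cINF_lower[OF bdd[of x] x] by simp
    show "h x \<le> H x" unfolding H_def
    proof (rule cINF_greatest)
      show "S \<noteq> {}" by fact
      fix x' assume "x' \<in> S"
      then have "h x - h x' \<le> \<rho> * norm (x - x')" using L x by fastforce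
      then show "h x \<le> h x' + \<rho> * norm (x - x')" by simp
    qed
  qed
  have half: "H x - \<rho> * norm (x - y) \<le> H y" for x y
    unfolding H_def
  proof (rule cINF_greatest)
    show "S \<noteq> {}" by fact
    fix x' assume x': "x' \<in> S"
    have "(INF x'\<in>S. h x' + \<rho> * norm (x - x')) \<le> h x' + \<rho> * norm (x - x')"
      using cINF_lower[OF bdd x'] by simp
    moreover have "norm (x - x') \<le> norm (x - y) + norm (y - x')" using norm_triangle_ineq[of "x - y" "y - x'"] by simp
    ultimately show "(INF x'\<in>S. h x' + \<rho> * norm (x - x')) - \<rho> * norm (x - y) \<le> h x' + \<rho> * norm (y - x')"
      using r by (smt (verit, best) mult_left_mono distrib_left)
  qed
  have "\<bar>H x - H y\<bar> \<le> \<rho> * norm (x - y)" for x y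
    using half[of x y] half[of y x] by (simp add: norm_minus_commute)
  then show ?thesis using that eq by blast
qed

lemma cond_law_facts:
  fixes M :: "'w measure"
    and X :: "'w \<Rightarrow> 'a::euclidean_space" and A :: "'w \<Rightarrow> nat" and Y :: "'w \<Rightarrow> real"
  assumes "X \<in> borel_measurable M" and "A \<in> measurable M (count_space UNIV)"
    and "Y \<in> borel_measurable M"
    and XX: "AE \<omega> in M. X \<omega> \<in> \<X>"
    and hm: "h \<in> borel_measurable borel" and Hm: "H \<in> borel_measurable borel"
    and HX: "\<And>x. x \<in> \<X> \<Longrightarrow> H x = h x"
    and ih: "integrable (cond_law M X A Y a) (\<lambda>z. \<bar>h (fst z) - snd z\<bar>)"
  shows "sets (cond_law M X A Y a) = sets borel"
    and "eps1 (cond_law M X A Y a) h = (\<integral>z. \<bar>H (fst z) - snd z\<bar> \<partial>cond_law M X A Y a)"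
    and "integrable (cond_law M X A Y a) (\<lambda>z. \<bar>H (fst z) - snd z\<bar>)"
proof -
  define E where "E = {\<omega> \<in> space M. A \<omega> = a}"
  define U where "U = uniform_measure M E"
  define P where "P = cond_law M X A Y a"
  have Es: "E \<in> sets M" unfolding E_def using assms(2) by measurable
  have sU: "sets U = sets M" unfolding U_def by simp
  have gm: "(\<lambda>\<omega>. (X \<omega>, Y \<omega>)) \<in> measurable U borel"
    unfolding measurable_cong_sets[OF sU refl] using assms(1,3) by measurable
  have Pd: "P = distr U borel (\<lambda>\<omega>. (X \<omega>, Y \<omega>))" unfolding P_def U_def E_def cond_law_def ..
  show sP: "sets (cond_law M X A Y a) = sets borel" by (simp add: cond_law_def)
  have "(\<lambda>z::'a \<times> real. \<bar>h (fst z) - snd z\<bar>) \<in> borel_measurable (borel \<Otimes>\<^sub>M borel)" using hm by measurable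
  then have fh: "(\<lambda>z::'a \<times> real. \<bar>h (fst z) - snd z\<bar>) \<in> borel_measurable P"
    using sP unfolding P_def by (metis borel_prod measurable_cong_sets)
  have "(\<lambda>z::'a \<times> real. \<bar>H (fst z) - snd z\<bar>) \<in> borel_measurable (borel \<Otimes>\<^sub>M borel)" using Hm by measurable
  then have fH: "(\<lambda>z::'a \<times> real. \<bar>H (fst z) - snd z\<bar>) \<in> borel_measurable P"
    using sP unfolding P_def by (metis borel_prod measurable_cong_sets)
  have "AE \<omega> in U. \<bar>h (X \<omega>) - Y \<omega>\<bar> = \<bar>H (X \<omega>) - Y \<omega>\<bar>"
    unfolding U_def
    by (rule AE_uniform_measureI[OF Es]) (use XX HX in \<open>auto elim!: eventually_mono\<close>)
  moreover have "{z \<in> space borel. \<bar>h (fst z) - snd z\<bar> = \<bar>H (fst z) - snd z\<bar>} \<in> sets (borel :: ('a \<times> real) measure)"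
  proof -
    have "{z \<in> space P. \<bar>h (fst z) - snd z\<bar> = \<bar>H (fst z) - snd z\<bar>} \<in> sets P"
      using fh fH by measurable
    then show ?thesis using sP unfolding P_def by (simp add: sets_eq_imp_space_eq[OF sP])
  qed
  ultimately have ae: "AE z in P. \<bar>h (fst z) - snd z\<bar> = \<bar>H (fst z) - snd z\<bar>"
    unfolding Pd by (subst AE_distr_iff[OF gm]) auto
  show "eps1 (cond_law M X A Y a) h = (\<integral>z. \<bar>H (fst z) - snd z\<bar> \<partial>cond_law M X A Y a)"
    unfolding eps1_def P_def[symmetric] by (rule integral_cong_AE[OF fh fH ae])
  show "integrable (cond_law M X A Y a) (\<lambda>z. \<bar>H (fst z) - snd z\<bar>)"
    using integrable_cong_AE[OF fh fH ae] ih unfolding P_def by simp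
qed

theorem proposition3:
  fixes M :: "'w measure"
    and X :: "'w \<Rightarrow> 'a::euclidean_space" and A :: "'w \<Rightarrow> nat" and Y :: "'w \<Rightarrow> real"
    and \<X> :: "'a set" and h :: "'a \<Rightarrow> real" and \<rho> :: real
  assumes "prob_space M"
    and "X \<in> borel_measurable M" and "A \<in> measurable M (count_space UNIV)"
    and "Y \<in> borel_measurable M"
    and "AE \<omega> in M. X \<omega> \<in> \<X>"
    and "AE \<omega> in M. A \<omega> \<in> {0, 1}"
    and "AE \<omega> in M. Y \<omega> \<in> {-1..1}"
    and "measure M {\<omega> \<in> space M. A \<omega> = 0} > 0"
    and "measure M {\<omega> \<in> space M. A \<omega> = 1} > 0"
    and "\<rho> \<ge> 0"
    and "h \<in> borel_measurable borel"
    and "\<forall>x\<in>\<X>. \<forall>x'\<in>\<X>. \<bar>h x - h x'\<bar> \<le> \<rho> * norm (x - x')"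
    and "integrable (cond_law M X A Y 0) (\<lambda>z. \<bar>h (fst z) - snd z\<bar>)"
    and "integrable (cond_law M X A Y 1) (\<lambda>z. \<bar>h (fst z) - snd z\<bar>)"
  shows "ennreal \<bar>eps1 (cond_law M X A Y 0) h - eps1 (cond_law M X A Y 1) h\<bar>
           \<le> ennreal (sqrt (\<rho>\<^sup>2 + 1)) * W1 (cond_law M X A Y 0) (cond_law M X A Y 1)"
proof -
  note a = assms
  interpret prob_space M by fact
  have ne: "\<X> \<noteq> {}"
  proof
    assume "\<X> = {}"
    then have "AE \<omega> in M. False" using a(5) by simp
    then show False using AE_False by simp
  qed
  obtain H where HX: "\<And>x. x \<in> \<X> \<Longrightarrow> H x = h x"
    and HL: "\<And>x y. \<bar>H x - H y\<bar> \<le> \<rho> * norm (x - y)"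
    using mcshane[OF ne a(10) a(12)] by blast
  have "\<rho>-lipschitz_on UNIV H"
    by (rule lipschitz_onI) (use HL a(10) in \<open>auto simp: dist_norm dist_real_def\<close>)
  then have "continuous_on UNIV H" by (rule lipschitz_on_continuous_on)
  then have Hm: "H \<in> borel_measurable borel" by (rule borel_measurable_continuous_onI)
  note f0 = cond_law_facts[OF a(2,3,4,5,11) Hm HX a(13)]
  note f1 = cond_law_facts[OF a(2,3,4,5,11) Hm HX a(14)]
  have "eps1 (cond_law M X A Y 0) h = (\<integral>z. \<bar>H (fst z) - snd z\<bar> \<partial>cond_law M X A Y 0)"
    by (rule f0(2))
  moreover have "eps1 (cond_law M X A Y 1) h = (\<integral>z. \<bar>H (fst z) - snd z\<bar> \<partial>cond_law M X A Y 1)"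
    by (rule f1(2))
  ultimately show ?thesis
    using key[OF f0(1) f1(1) Hm HL a(10) f0(3) f1(3)] by simp
qed

end
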